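(* Let $K$ be an algebraically closed field, $R=K[x_1,\dots,x_6]$ and $I=(x_1x_3,\ x_1x_4,\ x_2x_4,\ x_3x_5,\ x_3x_6,\ x_4x_6,\ x_1x_2x_5,\ x_1x_2x_6,\ x_1x_5x_6,\ x_2x_5x_6)$. Then $$I=\sqrt{(x_1x_4,\ x_3x_6,\ x_1x_3+x_2x_4+x_1x_2x_5,\ x_3x_5+x_4x_6+x_1x_2x_6+x_1x_5x_6+x_2x_5x_6)}.$$ *)

theory Defs
  imports "HOL-Computational_Algebra.Polynomial"
begin

text \<open>The polynomial ring K[x1,...,x6] is represented as the iterated univariate
  polynomial ring K[x1][x2][x3][x4][x5][x6] (nested type poly).\<close>

type_synonym 'a mpoly6 = "'a poly poly poly poly poly poly"

definition X1 :: "'a::comm_ring_1 mpoly6" where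
  "X1 = [:[:[:[:[:monom 1 1:]:]:]:]:]"
definition X2 :: "'a::comm_ring_1 mpoly6" where
  "X2 = [:[:[:[:monom 1 1:]:]:]:]"
definition X3 :: "'a::comm_ring_1 mpoly6" where
  "X3 = [:[:[:monom 1 1:]:]:]"
definition X4 :: "'a::comm_ring_1 mpoly6" where
  "X4 = [:[:monom 1 1:]:]"
definition X5 :: "'a::comm_ring_1 mpoly6" where
  "X5 = [:monom 1 1:]"
definition X6 :: "'a::comm_ring_1 mpoly6" where
  "X6 = monom 1 1"

definition ideal_gen :: "'b::comm_ring_1 set \<Rightarrow> 'b set" where
  "ideal_gen G = module.span ((*)) G"

definition radical :: "'b::comm_ring_1 set \<Rightarrow> 'b set" where
  "radical J = {f. \<exists>n. f ^ n \<in> J}"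

end

theory Submission
  imports Defs
begin


definition rhom :: "('b::comm_ring_1 \<Rightarrow> 'c::comm_ring_1) \<Rightarrow> bool" where
  "rhom f \<longleftrightarrow> f 0 = 0 \<and> f 1 = 1 \<and> (\<forall>x y. f (x + y) = f x + f y) \<and> (\<forall>x y. f (x * y) = f x * f y)"

lemma rhomD:
  assumes "rhom f"
  shows "f 0 = 0" "f 1 = 1" "f (x + y) = f x + f y" "f (x * y) = f x * f y"
    "f (- x) = - f x" "f (x - y) = f x - f y" "f (x ^ n) = f x ^ n"
proof -
  have z: "f 0 = 0" and o: "f 1 = 1" and ad: "\<And>x y. f (x + y) = f x + f y"
    and mu: "\<And>x y. f (x * y) = f x * f y"
    using assms unfolding rhom_def by blast+
  show "f 0 = 0" "f 1 = 1" "f (x + y) = f x + f y" "f (x * y) = f x * f y"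
    using z o ad mu by blast+
  have n: "f (- u) = - f u" for u
  proof -
    have "f (- u) + f u = f (- u + u)" by (rule ad[symmetric])
    also have "\<dots> = 0" by (simp add: z)
    finally show ?thesis by (simp add: eq_neg_iff_add_eq_0)
  qed
  then show "f (- x) = - f x" .
  show "f (x - y) = f x - f y"
    by (simp only: diff_conv_add_uminus ad n)
  show "f (x ^ n) = f x ^ n"
    by (induction n) (simp_all add: o mu)
qed

lemma rhom_id: "rhom id" by (simp add: rhom_def)

lemma map_poly_add_hom:
  assumes "f 0 = 0" "\<And>x y. f (x + y) = f x + f y"
  shows "map_poly f (p + q) = map_poly f p + map_poly f q"
  by (intro poly_eqI) (simp add: coeff_map_poly assms)

lemma map_poly_mult_hom:
  assumes "rhom f"
  shows "map_poly f (p * q) = map_poly f p * map_poly f q"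
proof (induction p)
  case 0
  then show ?case by simp
next
  case (pCons a p)
  have f0: "f 0 = 0" using rhomD[OF assms] by simp
  have "map_poly f (pCons a p * q) = map_poly f (smult a q + pCons 0 (p * q))"
    by simp
  also have "\<dots> = smult (f a) (map_poly f q) + pCons 0 (map_poly f p * map_poly f q)"
    using pCons.IH by (simp add: map_poly_add_hom rhomD[OF assms] map_poly_smult map_poly_pCons)
  also have "\<dots> = map_poly f (pCons a p) * map_poly f q"
    by (simp add: map_poly_pCons f0)
  finally show ?case .
qed

definition step :: "bool \<Rightarrow> ('b::comm_ring_1 \<Rightarrow> 'b) \<Rightarrow> 'b poly \<Rightarrow> 'b poly" where
  "step b g p = (if b then [:g (coeff p 0):] else map_poly g p)"

lemma rhom_step:
  assumes "rhom g" shows "rhom (step b g)"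
proof (cases b)
  case True
  then show ?thesis using rhomD[OF assms]
    unfolding rhom_def step_def by (simp add: coeff_mult_0)
next
  case False
  then show ?thesis using rhomD[OF assms]
    unfolding rhom_def step_def by (simp add: map_poly_mult_hom[OF assms] map_poly_add_hom)
qed

lemma step_0: "g 0 = 0 \<Longrightarrow> step b g 0 = 0"
  by (simp add: step_def)

lemma step_False_id: "step False id = id"
  by (auto simp: step_def)

lemma step_comp:
  assumes "g 0 = 0" "g' 0 = 0"
  shows "step b g (step b' g' p) = step (b \<or> b') (g \<circ> g') p"
  using assms by (auto simp: step_def coeff_map_poly map_poly_pCons map_poly_map_poly)

lemma step_comp': 
  assumes "g 0 = 0" "g' 0 = 0"
  shows "step b g \<circ> step b' g' = step (b \<or> b') (g \<circ> g')"
  by (rule ext) (simp add: step_comp assms)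

lemma step_const: "g 0 = 0 \<Longrightarrow> step b g [:c:] = [:g c:]"
  by (auto simp: step_def map_poly_pCons)

lemma step_X: "rhom g \<Longrightarrow> step b g (monom 1 1) = (if b then 0 else monom 1 1)"
  by (auto simp: step_def map_poly_monom rhomD coeff_monom)

lemma step_X': "rhom g \<Longrightarrow> step b g (monom 1 (Suc 0)) = (if b then 0 else monom 1 (Suc 0))"
  using step_X[of g b] by simp

lemma split_True: "\<exists>q. h - step True id h = monom 1 1 * q"
proof -
  have "poly (h - [:coeff h 0:]) 0 = 0" by (simp add: poly_0_coeff_0)
  then have "[:0, 1:] dvd (h - [:coeff h 0:])"
    using dvd_iff_poly_eq_0[of 0 "h - [:coeff h 0:]"] by simp
  then show ?thesis by (auto simp: step_def monom_altdef dvd_def)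
qed

lemma split_False:
  assumes "g 0 = 0" "\<And>c. \<exists>d. c - g c = Y * d"
  shows "\<exists>q. h - step False g h = [:Y:] * q"
proof -
  obtain D where D: "\<And>c. c - g c = Y * D c" using assms(2) by metis
  define D' where "D' c = (if c = 0 then 0 else D c)" for c
  have D': "c - g c = Y * D' c" for c by (cases "c = 0") (simp_all add: D'_def D assms(1))
  have "h - step False g h = [:Y:] * map_poly D' h"
    by (intro poly_eqI) (simp add: step_def coeff_map_poly assms(1) D' D'_def)
  then show ?thesis by blast
qed

definition zS :: "nat set \<Rightarrow> 'a::comm_ring_1 mpoly6 \<Rightarrow> 'a mpoly6" where
  "zS S = step (6 \<in> S) (step (5 \<in> S) (step (4 \<in> S) (step (3 \<in> S) (step (2 \<in> S)
     (step (1 \<in> S) (id :: 'a \<Rightarrow> 'a))))))"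

definition var :: "nat \<Rightarrow> 'a::comm_ring_1 mpoly6" where
  "var i = (if i = 1 then X1 else if i = 2 then X2 else if i = 3 then X3 else
            if i = 4 then X4 else if i = 5 then X5 else X6)"

lemma rhom_zS: "rhom (zS S)"
  unfolding zS_def by (intro rhom_step rhom_id)

lemmas zS_hom = rhomD[OF rhom_zS]

lemma zS_comp: "zS S (zS S' h) = zS (S \<union> S') h"
  unfolding zS_def by (simp add: step_comp step_comp' step_0)

lemma zS_empty: "zS {} h = h"
  unfolding zS_def by (simp add: step_False_id)

lemma zS_var: "i \<in> {1..6} \<Longrightarrow> zS S (var i) = (if i \<in> S then 0 else var i)"
proof -
  assume "i \<in> {1..6}"
  then have i: "i = 1 \<or> i = 2 \<or> i = 3 \<or> i = 4 \<or> i = 5 \<or> i = 6" by auto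
  have r: "rhom (step b (step b2 (step b3 (step b4 (step b5 (id::'a\<Rightarrow>'a))))))" for b b2 b3 b4 b5
    by (intro rhom_step rhom_id)
  have r2: "rhom (step b (step b2 (step b3 (step b4 (id::'a\<Rightarrow>'a)))))" for b b2 b3 b4
    by (intro rhom_step rhom_id)
  have r3: "rhom (step b (step b2 (step b3 (id::'a\<Rightarrow>'a))))" for b b2 b3
    by (intro rhom_step rhom_id)
  have r4: "rhom (step b (step b2 (id::'a\<Rightarrow>'a)))" for b b2
    by (intro rhom_step rhom_id)
  have r5: "rhom (step b (id::'a\<Rightarrow>'a))" for b
    by (intro rhom_step rhom_id)
  show ?thesis
    using i unfolding zS_def var_def X1_def X2_def X3_def X4_def X5_def X6_def
    by (auto simp: step_const step_0 step_X step_X' r r2 r3 r4 r5 rhom_id)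
qed

lemma var_nz: "(var i :: 'a::comm_ring_1 mpoly6) \<noteq> 0"
  unfolding var_def X1_def X2_def X3_def X4_def X5_def X6_def by auto

lemma split_F1: "\<exists>q. h - step False (step True id) h = [:monom 1 1:] * q"
  by (rule split_False, simp add: step_0, rule split_True)
lemma split_F2: "\<exists>q. h - step False (step False (step True id)) h = [:[:monom 1 1:]:] * q"
  by (rule split_False, simp add: step_0, rule split_F1)
lemma split_F3: "\<exists>q. h - step False (step False (step False (step True id))) h = [:[:[:monom 1 1:]:]:] * q"
  by (rule split_False, simp add: step_0, rule split_F2)
lemma split_F4: "\<exists>q. h - step False (step False (step False (step False (step True id)))) h = [:[:[:[:monom 1 1:]:]:]:] * q"
  by (rule split_False, simp add: step_0, rule split_F3)
lemma split_F5: "\<exists>q. h - step False (step False (step False (step False (step False (step True id))))) h = [:[:[:[:[:monom 1 1:]:]:]:]:] * q"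
  by (rule split_False, simp add: step_0, rule split_F4)

lemma zS_split:
  assumes "i \<in> {1..6}" shows "\<exists>q. h - zS {i} h = var i * q"
proof -
  have e6: "zS {6} = step True id" unfolding zS_def by (simp add: step_False_id)
  have e5: "zS {5} = step False (step True id)" unfolding zS_def by (simp add: step_False_id)
  have e4: "zS {4} = step False (step False (step True id))" unfolding zS_def by (simp add: step_False_id)
  have e3: "zS {3} = step False (step False (step False (step True id)))" unfolding zS_def by (simp add: step_False_id)
  have e2: "zS {2} = step False (step False (step False (step False (step True id))))" unfolding zS_def by (simp add: step_False_id)
  have e1: "zS {1} = step False (step False (step False (step False (step False (step True id)))))" unfolding zS_def by (simp add: step_False_id)
  have v: "var 1 = X1" "var 2 = X2" "var 3 = X3" "var 4 = X4" "var 5 = X5" "var 6 = X6"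
    by (simp_all add: var_def)
  consider "i = 1" | "i = 2" | "i = 3" | "i = 4" | "i = 5" | "i = 6" using assms by force
  then show ?thesis
  proof cases
    case 1 show ?thesis unfolding 1 e1 v X1_def by (rule split_F5)
  next
    case 2 show ?thesis unfolding 2 e2 v X2_def by (rule split_F4)
  next
    case 3 show ?thesis unfolding 3 e3 v X3_def by (rule split_F3)
  next
    case 4 show ?thesis unfolding 4 e4 v X4_def by (rule split_F2)
  next
    case 5 show ?thesis unfolding 5 e5 v X5_def by (rule split_F1)
  next
    case 6 show ?thesis unfolding 6 e6 v X6_def by (rule split_True)
  qed
qed



lemma mod_ring: "module ((*) :: 'b::comm_ring_1 \<Rightarrow> 'b \<Rightarrow> 'b)"
  by standard (simp_all add: algebra_simps)

lemma ig_add: "x \<in> ideal_gen G \<Longrightarrow> y \<in> ideal_gen G \<Longrightarrow> x + y \<in> ideal_gen G"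
  unfolding ideal_gen_def by (rule module.span_add[OF mod_ring])
lemma ig_mult: "x \<in> ideal_gen G \<Longrightarrow> c * x \<in> ideal_gen G"
  unfolding ideal_gen_def by (rule module.span_scale[OF mod_ring])
lemma ig_base: "x \<in> G \<Longrightarrow> x \<in> ideal_gen G"
  unfolding ideal_gen_def by (rule module.span_base[OF mod_ring])
lemma ig_zero: "0 \<in> ideal_gen G"
  unfolding ideal_gen_def by (rule module.span_zero[OF mod_ring])
lemma ig_sum: "(\<And>x. x \<in> A \<Longrightarrow> f x \<in> ideal_gen G) \<Longrightarrow> sum f A \<in> ideal_gen G"
  unfolding ideal_gen_def by (rule module.span_sum[OF mod_ring])
lemma ig_induct:
  assumes "x \<in> ideal_gen G" "P 0" "\<And>c x y. x \<in> G \<Longrightarrow> P y \<Longrightarrow> P (c * x + y)"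
  shows "P x"
  using assms unfolding ideal_gen_def by (rule module.span_induct_alt[OF mod_ring])
lemma ig_mono: "G \<subseteq> ideal_gen H \<Longrightarrow> ideal_gen G \<subseteq> ideal_gen H"
proof
  fix x assume G: "G \<subseteq> ideal_gen H" and x: "x \<in> ideal_gen G"
  show "x \<in> ideal_gen H"
    by (rule ig_induct[where P = "\<lambda>x. x \<in> ideal_gen H", OF x])
      (use G in \<open>auto intro: ig_zero ig_add ig_mult\<close>)
qed

definition Tr :: "nat set set \<Rightarrow> 'a::comm_ring_1 mpoly6 set" where
  "Tr P = {prod var T | T. T \<subseteq> {1..6} \<and> (\<forall>S\<in>P. T \<inter> S \<noteq> {})}"

lemma vanish_ideal:
  fixes h :: "'a::idom mpoly6"
  assumes "P \<subseteq> Pow {1..6}" "\<forall>S\<in>P. zS S h = 0"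
  shows "h \<in> ideal_gen (Tr P)"
  using assms
proof (induction "\<Sum>S\<in>P. card S + 1" arbitrary: P h rule: less_induct)
  case less
  have finP: "finite P" using less.prems(1) finite_subset by (metis finite_Pow_iff finite_atLeastAtMost)
  show ?case
  proof (cases "{} \<in> P")
    case True
    then have "h = 0" using less.prems(2) zS_empty by metis
    then show ?thesis by (simp add: ig_zero)
  next
    case False
    show ?thesis
    proof (cases "P = {}")
      case True
      have "prod var {} \<in> Tr P" unfolding Tr_def True by blast
      then have "h * 1 \<in> ideal_gen (Tr P)" by (intro ig_mult ig_base) simp
      then show ?thesis by simp
    next
      case Pne: False
      then obtain S0 where S0: "S0 \<in> P" by blast
      with False have "S0 \<noteq> {}" by metis
      then obtain i where i: "i \<in> S0" by blast
      have i6: "i \<in> {1..6}" using less.prems(1) S0 i by blast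
      have finS0: "finite S0" using less.prems(1) S0 finite_subset by blast
      obtain q where q: "h - zS {i} h = var i * q" using zS_split[OF i6] by blast
      define P1 where "P1 = (\<lambda>S. S - {i}) ` P"
      define P2 where "P2 = {S\<in>P. i \<notin> S}"
      have m1: "(\<Sum>S\<in>P1. card S + 1) < (\<Sum>S\<in>P. card S + 1)"
      proof -
        have "(\<Sum>S\<in>P1. card S + 1) \<le> (\<Sum>S\<in>P. card (S - {i}) + 1)"
          unfolding P1_def using sum_image_le[OF finP, of "\<lambda>S. card S + 1" "\<lambda>S. S - {i}"]
          by (simp add: o_def)
        also have "\<dots> < (\<Sum>S\<in>P. card S + 1)"
          by (rule sum_strict_mono_ex1[OF finP])
            (use S0 i finS0 in \<open>auto intro!: card_Diff1_le bexI[of _ S0] card_Diff1_less\<close>)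
        finally show ?thesis .
      qed
      have m2: "(\<Sum>S\<in>P2. card S + 1) < (\<Sum>S\<in>P. card S + 1)"
      proof -
        have "(\<Sum>S\<in>P. card S + 1) = (\<Sum>S\<in>P - P2. card S + 1) + (\<Sum>S\<in>P2. card S + 1)"
          by (rule sum.subset_diff) (auto simp: P2_def finP)
        moreover have "card S0 + 1 \<le> (\<Sum>S\<in>P - P2. card S + 1)"
          by (rule member_le_sum[where f = "\<lambda>S. card S + 1"]) (use S0 i finP in \<open>auto simp: P2_def\<close>)
        ultimately show ?thesis by linarith
      qed
      have h1: "zS {i} h \<in> ideal_gen (Tr P1)"
      proof (rule less.hyps[OF m1])
        show "P1 \<subseteq> Pow {1..6}" using less.prems(1) unfolding P1_def by auto
        show "\<forall>S\<in>P1. zS S (zS {i} h) = 0"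
        proof
          fix S' assume "S' \<in> P1"
          then obtain S where S: "S \<in> P" "S' = S - {i}" unfolding P1_def by blast
          have "zS S' (zS {i} h) = zS ({i} \<union> S) h" using S(2) zS_comp
            by (metis Un_Diff_cancel2 sup_commute)
          also have "\<dots> = zS {i} (zS S h)" by (simp add: zS_comp)
          also have "\<dots> = 0" using S(1) less.prems(2) by (simp add: zS_hom)
          finally show "zS S' (zS {i} h) = 0" .
        qed
      qed
      have h2: "q \<in> ideal_gen (Tr P2)"
      proof (rule less.hyps[OF m2])
        show "P2 \<subseteq> Pow {1..6}" using less.prems(1) unfolding P2_def by auto
        show "\<forall>S\<in>P2. zS S q = 0"
        proof
          fix S assume "S \<in> P2"
          then have S: "S \<in> P" "i \<notin> S" unfolding P2_def by auto
          have "zS S (var i * q) = zS S h - zS S (zS {i} h)" using q by (metis zS_hom(6))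
          also have "\<dots> = 0"
          proof -
            have c: "zS S (zS {i} h) = zS {i} (zS S h)" by (simp add: zS_comp Un_commute)
            have "zS S h = 0" using S(1) less.prems(2) by blast
            then show ?thesis unfolding c by (simp add: zS_hom)
          qed
          finally have "var i * zS S q = 0" using S(2) by (simp add: zS_hom zS_var[OF i6])
          moreover have "var i \<noteq> (0::'a mpoly6)" by (rule var_nz)
          ultimately show "zS S q = 0" by simp
        qed
      qed
      have sub1: "Tr P1 \<subseteq> Tr P"
      proof
        fix x assume "x \<in> Tr P1"
        then obtain T where T: "x = prod var T" "T \<subseteq> {1..6}" "\<forall>S\<in>P1. T \<inter> S \<noteq> {}"
          unfolding Tr_def by blast
        have "\<forall>S\<in>P. T \<inter> S \<noteq> {}"
        proof
          fix S assume "S \<in> P"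
          then have "S - {i} \<in> P1" unfolding P1_def by blast
          then have "T \<inter> (S - {i}) \<noteq> {}" using T(3) by blast
          then show "T \<inter> S \<noteq> {}" by blast
        qed
        then show "x \<in> Tr P" unfolding Tr_def using T(1,2) by blast
      qed
      have g2: "var i * x \<in> ideal_gen (Tr P)" if xT: "x \<in> Tr P2" for x
      proof -
        obtain T where T: "x = prod var T" "T \<subseteq> {1..6}" "\<forall>S\<in>P2. T \<inter> S \<noteq> {}"
          using xT unfolding Tr_def by blast
        have tr: "\<forall>S\<in>P. insert i T \<inter> S \<noteq> {}"
        proof
          fix S assume "S \<in> P"
          show "insert i T \<inter> S \<noteq> {}"
          proof (cases "i \<in> S")
            case True then show ?thesis by blast
          next
            case False
            then have "S \<in> P2" using \<open>S \<in> P\<close> unfolding P2_def by blast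
            then show ?thesis using T(3) by blast
          qed
        qed
        have "insert i T \<subseteq> {1..6}" using T(2) i6 by blast
        then have mem: "prod var (insert i T) \<in> Tr P"
          unfolding Tr_def using tr by blast
        have finT: "finite T" using T(2) finite_subset by blast
        have eq: "var i * x = (if i \<in> T then var i else 1) * prod var (insert i T)"
        proof (cases "i \<in> T")
          case True
          then show ?thesis using T(1) by (simp add: insert_absorb)
        next
          case False
          then show ?thesis using T(1) finT by simp
        qed
        show ?thesis unfolding eq by (rule ig_mult, rule ig_base, rule mem)
      qed
      have sub2: "var i * q \<in> ideal_gen (Tr P)"
      proof (rule ig_induct[where P = "\<lambda>x. var i * x \<in> ideal_gen (Tr P)", OF h2])
        show "var i * 0 \<in> ideal_gen (Tr P)" by (simp add: ig_zero)
      next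
        fix c x y :: "'a mpoly6" assume x: "x \<in> Tr P2" and y: "var i * y \<in> ideal_gen (Tr P)"
        have "var i * (c * x + y) = c * (var i * x) + var i * y" by (simp add: algebra_simps)
        then show "var i * (c * x + y) \<in> ideal_gen (Tr P)"
          using ig_add[OF ig_mult[OF g2[OF x]] y] by simp
      qed
      have "zS {i} h \<in> ideal_gen (Tr P)"
        using h1 ig_mono[of "Tr P1" "Tr P"] sub1 ig_base by blast
      then have "zS {i} h + var i * q \<in> ideal_gen (Tr P)" using sub2 by (rule ig_add)
      then show ?thesis using q by (metis add.commute diff_add_cancel)
    qed
  qed
qed



definition IG :: "'a::comm_ring_1 mpoly6 set" where
  "IG = {X1 * X3, X1 * X4, X2 * X4, X3 * X5, X3 * X6, X4 * X6,
                    X1 * X2 * X5, X1 * X2 * X6, X1 * X5 * X6, X2 * X5 * X6}"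
definition JG :: "'a::comm_ring_1 mpoly6 set" where
  "JG = {X1 * X4, X3 * X6, X1 * X3 + X2 * X4 + X1 * X2 * X5,
              X3 * X5 + X4 * X6 + X1 * X2 * X6 + X1 * X5 * X6 + X2 * X5 * X6}"

lemma cert0_gen: fixes x1 x2 x3 x4 x5 x6 :: "'b::comm_ring_1" shows "(x1 * x3 :: 'b::comm_ring_1) ^ 3 = (- (x1 * x2 * x3 ^ 2) + x1 ^ 2 * x2 * x3 * x6) * (x1 * x4) + (x1 ^ 3 * x2 ^ 2 * x5 + x1 ^ 4 * x2 * x5 + x1 ^ 4 * x2 ^ 2) * (x3 * x6) + (x1 ^ 2 * x3 ^ 2) * (x1 * x3 + x2 * x4 + x1 * x2 * x5) + (- (x1 ^ 3 * x2 * x3)) * (x3 * x5 + x4 * x6 + x1 * x2 * x6 + x1 * x5 * x6 + x2 * x5 * x6)"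
  by (simp add: algebra_simps eval_nat_numeral)
lemmas cert0 = cert0_gen[where ?x1.0=X1 and ?x2.0=X2 and ?x3.0=X3 and ?x4.0=X4 and ?x5.0=X5 and ?x6.0=X6]

lemma cert1_gen: fixes x1 x2 x3 x4 x5 x6 :: "'b::comm_ring_1" shows "(x1 * x4 :: 'b::comm_ring_1) ^ 1 = (1) * (x1 * x4) + 0 * (x3 * x6) + 0 * (x1 * x3 + x2 * x4 + x1 * x2 * x5) + 0 * (x3 * x5 + x4 * x6 + x1 * x2 * x6 + x1 * x5 * x6 + x2 * x5 * x6)"
  by (simp add: algebra_simps eval_nat_numeral)
lemmas cert1 = cert1_gen[where ?x1.0=X1 and ?x2.0=X2 and ?x3.0=X3 and ?x4.0=X4 and ?x5.0=X5 and ?x6.0=X6]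

lemma cert2_gen: fixes x1 x2 x3 x4 x5 x6 :: "'b::comm_ring_1" shows "(x2 * x4 :: 'b::comm_ring_1) ^ 2 = (- (x2 * x3) - x2 ^ 2 * x5) * (x1 * x4) + 0 * (x3 * x6) + (x2 * x4) * (x1 * x3 + x2 * x4 + x1 * x2 * x5) + 0 * (x3 * x5 + x4 * x6 + x1 * x2 * x6 + x1 * x5 * x6 + x2 * x5 * x6)"
  by (simp add: algebra_simps eval_nat_numeral)
lemmas cert2 = cert2_gen[where ?x1.0=X1 and ?x2.0=X2 and ?x3.0=X3 and ?x4.0=X4 and ?x5.0=X5 and ?x6.0=X6]

lemma cert3_gen: fixes x1 x2 x3 x4 x5 x6 :: "'b::comm_ring_1" shows "(x3 * x5 :: 'b::comm_ring_1) ^ 2 = 0 * (x1 * x4) + (- (x4 * x5) - x2 * x5 ^ 2 - x1 * x5 ^ 2 - x1 * x2 * x5) * (x3 * x6) + 0 * (x1 * x3 + x2 * x4 + x1 * x2 * x5) + (x3 * x5) * (x3 * x5 + x4 * x6 + x1 * x2 * x6 + x1 * x5 * x6 + x2 * x5 * x6)"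
  by (simp add: algebra_simps eval_nat_numeral)
lemmas cert3 = cert3_gen[where ?x1.0=X1 and ?x2.0=X2 and ?x3.0=X3 and ?x4.0=X4 and ?x5.0=X5 and ?x6.0=X6]

lemma cert4_gen: fixes x1 x2 x3 x4 x5 x6 :: "'b::comm_ring_1" shows "(x3 * x6 :: 'b::comm_ring_1) ^ 1 = 0 * (x1 * x4) + (1) * (x3 * x6) + 0 * (x1 * x3 + x2 * x4 + x1 * x2 * x5) + 0 * (x3 * x5 + x4 * x6 + x1 * x2 * x6 + x1 * x5 * x6 + x2 * x5 * x6)"
  by (simp add: algebra_simps eval_nat_numeral)
lemmas cert4 = cert4_gen[where ?x1.0=X1 and ?x2.0=X2 and ?x3.0=X3 and ?x4.0=X4 and ?x5.0=X5 and ?x6.0=X6]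

lemma cert5_gen: fixes x1 x2 x3 x4 x5 x6 :: "'b::comm_ring_1" shows "(x4 * x6 :: 'b::comm_ring_1) ^ 3 = (- (x4 * x5 * x6 ^ 3) + x3 * x5 * x6 ^ 3 + x2 * x5 ^ 2 * x6 ^ 3 - x2 * x4 * x6 ^ 3) * (x1 * x4) + (- (x4 ^ 2 * x5 * x6)) * (x3 * x6) + (- (x4 * x5 * x6 ^ 3)) * (x1 * x3 + x2 * x4 + x1 * x2 * x5) + (x4 ^ 2 * x6 ^ 2) * (x3 * x5 + x4 * x6 + x1 * x2 * x6 + x1 * x5 * x6 + x2 * x5 * x6)"
  by (simp add: algebra_simps eval_nat_numeral)
lemmas cert5 = cert5_gen[where ?x1.0=X1 and ?x2.0=X2 and ?x3.0=X3 and ?x4.0=X4 and ?x5.0=X5 and ?x6.0=X6]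

lemma cert6_gen: fixes x1 x2 x3 x4 x5 x6 :: "'b::comm_ring_1" shows "(x1 * x2 * x5 :: 'b::comm_ring_1) ^ 3 = (x1 * x2 ^ 2 * x3 * x5 - x1 * x2 ^ 3 * x5 ^ 2 - x1 ^ 2 * x2 * x3 * x6) * (x1 * x4) + (- (x1 ^ 3 * x2 ^ 2 * x5) - x1 ^ 4 * x2 * x5 - x1 ^ 4 * x2 ^ 2) * (x3 * x6) + (- (x1 ^ 2 * x2 * x3 * x5) + x1 ^ 2 * x2 ^ 2 * x5 ^ 2) * (x1 * x3 + x2 * x4 + x1 * x2 * x5) + (x1 ^ 3 * x2 * x3) * (x3 * x5 + x4 * x6 + x1 * x2 * x6 + x1 * x5 * x6 + x2 * x5 * x6)"
  by (simp add: algebra_simps eval_nat_numeral)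
lemmas cert6 = cert6_gen[where ?x1.0=X1 and ?x2.0=X2 and ?x3.0=X3 and ?x4.0=X4 and ?x5.0=X5 and ?x6.0=X6]

lemma cert7_gen: fixes x1 x2 x3 x4 x5 x6 :: "'b::comm_ring_1" shows "(x1 * x2 * x6 :: 'b::comm_ring_1) ^ 3 = (x2 ^ 3 * x6 ^ 3) * (x1 * x4) + (x1 ^ 2 * x2 ^ 2 * x6 ^ 2 - x1 ^ 2 * x2 ^ 2 * x5 * x6 + x1 ^ 3 * x2 * x6 ^ 2) * (x3 * x6) + (- (x1 * x2 ^ 2 * x6 ^ 3) - x1 ^ 2 * x2 * x6 ^ 3) * (x1 * x3 + x2 * x4 + x1 * x2 * x5) + (x1 ^ 2 * x2 ^ 2 * x6 ^ 2) * (x3 * x5 + x4 * x6 + x1 * x2 * x6 + x1 * x5 * x6 + x2 * x5 * x6)"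
  by (simp add: algebra_simps eval_nat_numeral)
lemmas cert7 = cert7_gen[where ?x1.0=X1 and ?x2.0=X2 and ?x3.0=X3 and ?x4.0=X4 and ?x5.0=X5 and ?x6.0=X6]

lemma cert8_gen: fixes x1 x2 x3 x4 x5 x6 :: "'b::comm_ring_1" shows "(x1 * x5 * x6 :: 'b::comm_ring_1) ^ 3 = (x2 * x5 ^ 2 * x6 ^ 3 - x1 * x5 ^ 2 * x6 ^ 3 + x1 * x2 * x5 * x6 ^ 3) * (x1 * x4) + (x1 ^ 2 * x5 ^ 2 * x6 ^ 2 - x1 ^ 2 * x5 ^ 3 * x6 + x1 ^ 3 * x5 * x6 ^ 2) * (x3 * x6) + (- (x1 * x5 ^ 2 * x6 ^ 3) - x1 ^ 2 * x5 * x6 ^ 3) * (x1 * x3 + x2 * x4 + x1 * x2 * x5) + (x1 ^ 2 * x5 ^ 2 * x6 ^ 2) * (x3 * x5 + x4 * x6 + x1 * x2 * x6 + x1 * x5 * x6 + x2 * x5 * x6)"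
  by (simp add: algebra_simps eval_nat_numeral)
lemmas cert8 = cert8_gen[where ?x1.0=X1 and ?x2.0=X2 and ?x3.0=X3 and ?x4.0=X4 and ?x5.0=X5 and ?x6.0=X6]

lemma cert9_gen: fixes x1 x2 x3 x4 x5 x6 :: "'b::comm_ring_1" shows "(x2 * x5 * x6 :: 'b::comm_ring_1) ^ 3 = (x2 * x3 * x6 ^ 3 - x2 ^ 3 * x6 ^ 3) * (x1 * x4) + (- (x2 ^ 2 * x5 ^ 3 * x6) - x2 ^ 2 * x4 * x5 * x6 + x1 * x2 * x5 ^ 2 * x6 ^ 2 + x1 * x2 ^ 2 * x5 * x6 ^ 2) * (x3 * x6) + (- (x2 * x5 ^ 2 * x6 ^ 3) - x2 * x4 * x6 ^ 3 - x2 ^ 2 * x5 * x6 ^ 3) * (x1 * x3 + x2 * x4 + x1 * x2 * x5) + (x2 ^ 2 * x5 ^ 2 * x6 ^ 2 + x2 ^ 2 * x4 * x6 ^ 2) * (x3 * x5 + x4 * x6 + x1 * x2 * x6 + x1 * x5 * x6 + x2 * x5 * x6)"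
  by (simp add: algebra_simps eval_nat_numeral)
lemmas cert9 = cert9_gen[where ?x1.0=X1 and ?x2.0=X2 and ?x3.0=X3 and ?x4.0=X4 and ?x5.0=X5 and ?x6.0=X6]

lemma cert_mem:
  assumes "x = c1 * a + c2 * b + c3 * c + c4 * d" "a \<in> G" "b \<in> G" "c \<in> G" "d \<in> G"
  shows "x \<in> ideal_gen G"
  unfolding assms(1) by (intro ig_add ig_mult ig_base assms(2-5))

lemma radical_add:
  fixes a b :: "'b::comm_ring_1"
  assumes "a ^ m \<in> ideal_gen G" "b ^ n \<in> ideal_gen G"
  shows "(a + b) ^ (m + n) \<in> ideal_gen G"
proof -
  have "(a + b) ^ (m + n) = (\<Sum>k\<le>m + n. of_nat (m + n choose k) * a ^ k * b ^ (m + n - k))"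
    by (rule binomial_ring)
  also have "\<dots> \<in> ideal_gen G"
  proof (rule ig_sum)
    fix k assume k: "k \<in> {..m + n}"
    show "of_nat (m + n choose k) * a ^ k * b ^ (m + n - k) \<in> ideal_gen G"
    proof (cases "m \<le> k")
      case True
      then have "k = (k - m) + m" by arith
      then have "a ^ k = a ^ (k - m) * a ^ m" by (metis power_add)
      then have "of_nat (m + n choose k) * a ^ k * b ^ (m + n - k)
          = (of_nat (m + n choose k) * a ^ (k - m) * b ^ (m + n - k)) * a ^ m"
        by (simp add: algebra_simps)
      then show ?thesis using assms(1) ig_mult by metis
    next
      case False
      then have "m + n - k = (m + n - k - n) + n" by arith
      then have "b ^ (m + n - k) = b ^ (m + n - k - n) * b ^ n" by (metis power_add)
      then have "of_nat (m + n choose k) * a ^ k * b ^ (m + n - k)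
          = (of_nat (m + n choose k) * a ^ k * b ^ (m + n - k - n)) * b ^ n"
        by (simp add: algebra_simps)
      then show ?thesis using assms(2) ig_mult by metis
    qed
  qed
  finally show ?thesis .
qed

lemma IG_sub_rad: "ideal_gen (IG :: 'a::comm_ring_1 mpoly6 set) \<subseteq> radical (ideal_gen JG)"
proof
  fix x :: "'a mpoly6" assume x: "x \<in> ideal_gen IG"
  have base: "\<exists>n. g ^ n \<in> ideal_gen JG" if "g \<in> IG" for g
    using that unfolding IG_def
    apply safe
    by (rule exI, rule cert_mem, rule cert0 cert1 cert2 cert3 cert4 cert5 cert6 cert7 cert8 cert9,
        simp_all add: JG_def)+
  show "x \<in> radical (ideal_gen JG)"
    unfolding radical_def mem_Collect_eq
  proof (rule ig_induct[where P = "\<lambda>x. \<exists>n. x ^ n \<in> ideal_gen JG", OF x])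
    show "\<exists>n. (0::'a mpoly6) ^ n \<in> ideal_gen JG" by (rule exI[of _ 1]) (simp add: ig_zero)
  next
    fix c x y :: "'a mpoly6"
    assume a1: "x \<in> IG" and a2: "\<exists>n. y ^ n \<in> ideal_gen JG"
    obtain m where m: "x ^ m \<in> ideal_gen JG" using base a1 by blast
    obtain n where n: "y ^ n \<in> ideal_gen JG" using a2 by blast
    have "(c * x) ^ m \<in> ideal_gen JG" using m by (simp add: power_mult_distrib ig_mult)
    then show "\<exists>n. (c * x + y) ^ n \<in> ideal_gen JG" using radical_add n by blast
  qed
qed



lemma Xv: "X1 = var 1" "X2 = var 2" "X3 = var 3" "X4 = var 4" "X5 = var 5" "X6 = var 6"
  by (simp_all add: var_def)

definition Pi0 :: "nat set set" where
  "Pi0 = {{1,2,3,4}, {1,2,3,6}, {1,2,5,6}, {1,3,4,5}, {1,3,4,6}, {1,4,5,6}, {2,3,4,5},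
          {2,3,4,6}, {3,4,5,6}}"

lemma IG_vanish: "S \<in> Pi0 \<Longrightarrow> g \<in> IG \<Longrightarrow> zS S g = 0"
  unfolding Pi0_def IG_def by (auto simp: Xv zS_hom zS_var)

lemma ideal_IG_vanish:
  assumes "S \<in> Pi0" "x \<in> ideal_gen IG" shows "zS S x = 0"
  by (rule ig_induct[where P = "\<lambda>x. zS S x = 0", OF assms(2)])
    (auto simp: zS_hom IG_vanish[OF assms(1)])

lemma JG_sub_IG: "ideal_gen JG \<subseteq> ideal_gen IG"
proof (rule ig_mono)
  have m: "\<And>g. g \<in> IG \<Longrightarrow> g \<in> ideal_gen IG" by (rule ig_base)
  show "JG \<subseteq> ideal_gen IG" unfolding JG_def
    apply (simp only: insert_subset empty_subsetI simp_thms)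
    apply (intro conjI ig_add m; simp add: IG_def)
    done
qed

lemma comb:
  assumes "b1 \<or> b2 \<or> b3 \<or> b4" "b1 \<or> b2 \<or> b3 \<or> b6" "b1 \<or> b2 \<or> b5 \<or> b6" "b1 \<or> b3 \<or> b4 \<or> b5"
    "b1 \<or> b3 \<or> b4 \<or> b6" "b1 \<or> b4 \<or> b5 \<or> b6" "b2 \<or> b3 \<or> b4 \<or> b5" "b2 \<or> b3 \<or> b4 \<or> b6"
    "b3 \<or> b4 \<or> b5 \<or> b6"
  shows "(b1 \<and> b3) \<or> (b1 \<and> b4) \<or> (b2 \<and> b4) \<or> (b3 \<and> b5) \<or> (b3 \<and> b6) \<or> (b4 \<and> b6) \<or>
    (b1 \<and> b2 \<and> b5) \<or> (b1 \<and> b2 \<and> b6) \<or> (b1 \<and> b5 \<and> b6) \<or> (b2 \<and> b5 \<and> b6)"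
  using assms by (cases b1; cases b2; cases b3; cases b4; cases b5; cases b6) simp_all

definition Gs :: "nat set set" where
  "Gs = {{1,3}, {1,4}, {2,4}, {3,5}, {3,6}, {4,6}, {1,2,5}, {1,2,6}, {1,5,6}, {2,5,6}}"

lemma Gs_IG: "G \<in> Gs \<Longrightarrow> prod var G \<in> (IG :: 'a::comm_ring_1 mpoly6 set)"
  unfolding Gs_def IG_def by (auto simp: Xv mult.assoc)

lemma Tr_sub: "Tr Pi0 \<subseteq> ideal_gen (IG :: 'a::comm_ring_1 mpoly6 set)"
proof
  fix x :: "'a mpoly6" assume "x \<in> Tr Pi0"
  then obtain T where T: "x = prod var T" "T \<subseteq> {1..6}" "\<forall>S\<in>Pi0. T \<inter> S \<noteq> {}"
    unfolding Tr_def by blast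
  have "\<exists>G\<in>Gs. G \<subseteq> T"
  proof -
    have hS: "\<And>S. S \<in> Pi0 \<Longrightarrow> \<exists>i\<in>S. i \<in> T" using T(3) by blast
    have c0: "1\<in>T \<or> 2\<in>T \<or> 3\<in>T \<or> 4\<in>T" using hS[of "{1,2,3,4}"] by (simp add: Pi0_def)
    have c1: "1\<in>T \<or> 2\<in>T \<or> 3\<in>T \<or> 6\<in>T" using hS[of "{1,2,3,6}"] by (simp add: Pi0_def)
    have c2: "1\<in>T \<or> 2\<in>T \<or> 5\<in>T \<or> 6\<in>T" using hS[of "{1,2,5,6}"] by (simp add: Pi0_def)
    have c3: "1\<in>T \<or> 3\<in>T \<or> 4\<in>T \<or> 5\<in>T" using hS[of "{1,3,4,5}"] by (simp add: Pi0_def)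
    have c4: "1\<in>T \<or> 3\<in>T \<or> 4\<in>T \<or> 6\<in>T" using hS[of "{1,3,4,6}"] by (simp add: Pi0_def)
    have c5: "1\<in>T \<or> 4\<in>T \<or> 5\<in>T \<or> 6\<in>T" using hS[of "{1,4,5,6}"] by (simp add: Pi0_def)
    have c6: "2\<in>T \<or> 3\<in>T \<or> 4\<in>T \<or> 5\<in>T" using hS[of "{2,3,4,5}"] by (simp add: Pi0_def)
    have c7: "2\<in>T \<or> 3\<in>T \<or> 4\<in>T \<or> 6\<in>T" using hS[of "{2,3,4,6}"] by (simp add: Pi0_def)
    have c8: "3\<in>T \<or> 4\<in>T \<or> 5\<in>T \<or> 6\<in>T" using hS[of "{3,4,5,6}"] by (simp add: Pi0_def)
    have "(1\<in>T \<and> 3\<in>T) \<or> (1\<in>T \<and> 4\<in>T) \<or> (2\<in>T \<and> 4\<in>T) \<or> (3\<in>T \<and> 5\<in>T) \<or> (3\<in>T \<and> 6\<in>T) \<or> (4\<in>T \<and> 6\<in>T) \<or>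
      (1\<in>T \<and> 2\<in>T \<and> 5\<in>T) \<or> (1\<in>T \<and> 2\<in>T \<and> 6\<in>T) \<or> (1\<in>T \<and> 5\<in>T \<and> 6\<in>T) \<or> (2\<in>T \<and> 5\<in>T \<and> 6\<in>T)"
      by (rule comb[OF c0 c1 c2 c3 c4 c5 c6 c7 c8])
    then show ?thesis unfolding Gs_def by auto
  qed
  then obtain G where G: "G \<in> Gs" "G \<subseteq> T" by blast
  have finT: "finite T" using T(2) finite_subset by blast
  have "x = prod var (T - G) * prod var G"
    using T(1) G(2) finT by (simp add: prod.subset_diff)
  then show "x \<in> ideal_gen IG" using Gs_IG[OF G(1)] by (metis ig_base ig_mult)
qed

lemma rad_sub_IG: "radical (ideal_gen (JG :: 'a::idom mpoly6 set)) \<subseteq> ideal_gen IG"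
proof
  fix h :: "'a mpoly6" assume "h \<in> radical (ideal_gen JG)"
  then obtain n where n: "h ^ n \<in> ideal_gen JG" unfolding radical_def by blast
  have "\<forall>S\<in>Pi0. zS S h = 0"
  proof
    fix S assume S: "S \<in> Pi0"
    have "zS S (h ^ n) = 0" using ideal_IG_vanish[OF S] JG_sub_IG n by blast
    then show "zS S h = 0" by (simp add: zS_hom)
  qed
  moreover have "Pi0 \<subseteq> Pow {1..6}" unfolding Pi0_def by auto
  ultimately have "h \<in> ideal_gen (Tr Pi0)" using vanish_ideal by blast
  then show "h \<in> ideal_gen IG" using ig_mono[OF Tr_sub] by blast
qed

theorem mainTheorem12:
  shows "ideal_gen {X1 * X3, X1 * X4, X2 * X4, X3 * X5, X3 * X6, X4 * X6,
                    X1 * X2 * X5, X1 * X2 * X6, X1 * X5 * X6, X2 * X5 * X6}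
       = radical (ideal_gen {X1 * X4, X3 * X6, X1 * X3 + X2 * X4 + X1 * X2 * X5,
              X3 * X5 + X4 * X6 + X1 * X2 * X6 + X1 * X5 * X6 + X2 * X5 * X6}
              :: 'a::alg_closed_field mpoly6 set)"
  using IG_sub_rad rad_sub_IG unfolding IG_def JG_def by blast

end
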